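(* Fix $y\in X$ and $f\in P_k$. Suppose there are polynomials $p_1,\dotsc,p_M$ of degree $k$ on $\mathbb{R}^{n(n-1)/2}$, each taking only the values $0$ or $1$ on $X$, and positive constants $b_k < c_k$ such that for every pair of distinct $i,j\in\{1,\dotsc,n\}$, \[ \sum_{x\in X:\ \{i,j\}\in x}\ \sum_{\ell=1}^{M} p_\ell(x) = \begin{cases} b_k & \text{if } \{i,j\}\notin y,\\ c_k & \text{if } \{i,j\}\in y.\end{cases} \] Then $-\frac{b_k(n-1)}{2(c_k-b_k)} \le f(y)$.
   Context: Let $N=n(n-1)/2$, coordinates of $\mathbb{R}^N$ indexed by unordered pairs $\{i,j\}$ of distinct elements of $\{1,\dotsc,n\}$. Let $X\subset\mathbb{R}^N$ be the set of incidence vectors of Hamiltonian cycles of $K_n$; for $x\in X$, "$\{i,j\}\in x$" means the cycle $x$ contains edge $\{i,j\}$. $P_k$ is the set of functions $f:X\to\mathbb{R}$ that are restrictions of linear functions on $\mathbb{R}^N$, have average value $1$ on $X$, and such that $q_f(h)=\frac{1}{|X|}\sum_{x\in X}f(x)h(x)^2\ge 0$ for every polynomial $h$ of degree at most $k$ on $\mathbb{R}^N$. *)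

theory Defs
  imports Complex_Main "HOL-Library.Multiset"
begin

text \<open>Vertices are 1..n. A point of R^N is a function from unordered pairs
(two-element sets of vertices) to real; only the coordinates indexed by
edges of K_n matter.\<close>

type_synonym point = "nat set \<Rightarrow> real"

definition edges :: "nat \<Rightarrow> nat set set" where
  "edges n = {{i, j} | i j. i \<in> {1..n} \<and> j \<in> {1..n} \<and> i \<noteq> j}"

definition ham_cycles :: "nat \<Rightarrow> nat set set set" where
  "ham_cycles n = {{{vs ! i, vs ! ((i + 1) mod n)} | i. i < n} | vs.
       n \<ge> 3 \<and> distinct vs \<and> set vs = {1..n} \<and> length vs = n}"

definition HC :: "nat \<Rightarrow> point set" where
  "HC n = {(\<lambda>e. if e \<in> C then 1 else 0) | C. C \<in> ham_cycles n}"

text \<open>Polynomial functions of degree at most k on R^N: finite linear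
combinations of monomials, a monomial being a multiset of coordinates.\<close>
definition poly_deg_le :: "nat \<Rightarrow> nat \<Rightarrow> (point \<Rightarrow> real) \<Rightarrow> bool" where
  "poly_deg_le n k h \<longleftrightarrow> (\<exists>S coef. finite S \<and>
     (\<forall>m\<in>S. set_mset m \<subseteq> edges n \<and> size m \<le> k) \<and>
     (\<forall>x. h x = (\<Sum>m\<in>S. coef m * (\<Prod>e\<in>#m. x e))))"

definition qf :: "nat \<Rightarrow> (point \<Rightarrow> real) \<Rightarrow> (point \<Rightarrow> real) \<Rightarrow> real" where
  "qf n f h = (1 / real (card (HC n))) * (\<Sum>x\<in>HC n. f x * (h x)^2)"

definition Pk :: "nat \<Rightarrow> nat \<Rightarrow> (point \<Rightarrow> real) set" where
  "Pk n k = {f. (\<exists>a. \<forall>x\<in>HC n. f x = (\<Sum>e\<in>edges n. a e * x e)) \<and>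
     (1 / real (card (HC n))) * (\<Sum>x\<in>HC n. f x) = 1 \<and>
     (\<forall>h. poly_deg_le n k h \<longrightarrow> qf n f h \<ge> 0)}"

end

theory Submission imports Defs begin

definition sw :: "nat \<Rightarrow> nat \<Rightarrow> nat \<Rightarrow> nat" where
  "sw a b x = (if x = a then b else if x = b then a else x)"

lemma sw_sw[simp]: "sw a b (sw a b x) = x"
  by (simp add: sw_def)

lemma inj_sw: "inj (sw a b)"
  by (metis injI sw_sw)

lemma sw_range: "a \<in> {1..n} \<Longrightarrow> b \<in> {1..n} \<Longrightarrow> x \<in> {1..n} \<Longrightarrow> sw a b x \<in> {1..n}"
  by (simp add: sw_def)

lemma sw_image: assumes "a \<in> {1..n}" "b \<in> {1..n}" shows "sw a b ` {1..(n::nat)} = {1..n}"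
proof
  show "sw a b ` {1..n} \<subseteq> {1..n}" using sw_range[OF assms] by blast
  show "{1..n} \<subseteq> sw a b ` {1..n}"
  proof
    fix x assume x: "x \<in> {1..n}"
    have "x = sw a b (sw a b x)" by simp
    then show "x \<in> sw a b ` {1..n}" using sw_range[OF assms x] by blast
  qed
qed

lemma ham_sw:
  assumes "C \<in> ham_cycles n" "a \<in> {1..n}" "b \<in> {1..n}"
  shows "image (sw a b) ` C \<in> ham_cycles n"
proof -
  obtain vs where vs: "C = {{vs ! i, vs ! ((i + 1) mod n)} | i. i < n}" "n \<ge> 3"
    "distinct vs" "set vs = {1..n}" "length vs = n"
    using assms(1) unfolding ham_cycles_def by blast
  let ?ws = "map (sw a b) vs"
  have C': "C = (\<lambda>i. {vs ! i, vs ! ((i + 1) mod n)}) ` {i. i < n}"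
    unfolding vs(1) by (rule setcompr_eq_image)
  have "image (sw a b) ` C = (\<lambda>i. {?ws ! i, ?ws ! ((i + 1) mod n)}) ` {i. i < n}"
    unfolding C' image_image
  proof (rule image_cong[OF refl])
    fix i assume "i \<in> {i. i < n}"
    moreover have "(i + 1) mod n < n" using vs(2) by simp
    ultimately show "sw a b ` {vs ! i, vs ! ((i + 1) mod n)} = {?ws ! i, ?ws ! ((i + 1) mod n)}"
      using vs(5) by simp
  qed
  then have "image (sw a b) ` C = {{?ws ! i, ?ws ! ((i + 1) mod n)} | i. i < n}"
    by (simp only: setcompr_eq_image)
  moreover have "distinct ?ws" using vs(3) inj_sw by (simp add: distinct_map inj_on_def)
  moreover have "set ?ws = {1..n}" using vs(4) sw_image[OF assms(2,3)] by simp
  ultimately show ?thesis unfolding ham_cycles_def mem_Collect_eq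
    apply -
    apply (rule exI[of _ ?ws])
    using vs by simp
qed

lemma mod_lemma:
  assumes "i < n" "j < n" "(n::nat) \<ge> 3" "i = (j + 1) mod n" "j = (i + 1) mod n"
  shows False
proof (cases "j + 1 < n")
  case True
  then have i: "i = j + 1" using assms(4) by simp
  show False
  proof (cases "i + 1 < n")
    case True then have "j = i + 1" using assms(5) by simp
    then show False using i by simp
  next
    case False then have "i + 1 = n" using assms(1) by simp
    then have "j = 0" using assms(5) by simp
    then show False using \<open>i + 1 = n\<close> i assms(3) by simp
  qed
next
  case False
  then have jn: "j + 1 = n" using assms(2) by simp
  then have "i = 0" using assms(4) by simp
  then have "j = 1 mod n" using assms(5) by simp
  then have "j = 1" using assms(3) by simp
  then show False using jn assms(3) by simp
qed

lemma cycle_props: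
  assumes "C \<in> ham_cycles n"
  shows "n \<ge> 3" "C \<subseteq> edges n" "card C = n"
proof -
  obtain vs where vs: "C = {{vs ! i, vs ! ((i + 1) mod n)} | i. i < n}" "n \<ge> 3"
    "distinct vs" "set vs = {1..n}" "length vs = n"
    using assms(1) unfolding ham_cycles_def by blast
  show "n \<ge> 3" by (rule vs(2))
  have C: "C = (\<lambda>i. {vs ! i, vs ! ((i + 1) mod n)}) ` {..<n}"
    unfolding vs(1) lessThan_def by (rule setcompr_eq_image)
  have inn: "vs ! i \<in> {1..n}" if "i < n" for i
  proof -
    have "vs ! i \<in> set vs" using that vs(5) by (intro nth_mem) simp
    then show ?thesis using vs(4) by blast
  qed
  have eq: "p = q" if "p < n" "q < n" "vs ! p = vs ! q" for p q
    using nth_eq_iff_index_eq[OF vs(3)] that vs(5) by metis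
  have m: "(i + 1) mod n < n" for i using vs(2) by simp
  have ne: "vs ! i \<noteq> vs ! ((i + 1) mod n)" if i: "i < n" for i
  proof
    assume "vs ! i = vs ! ((i + 1) mod n)"
    then have h: "i = (i + 1) mod n" using eq[OF i m] by blast
    show False
    proof (cases "i + 1 < n")
      case True
      then have "(i + 1) mod n = i + 1" by simp
      then show False using h by simp
    next
      case False
      then have "i + 1 = n" using i by simp
      then have "(i + 1) mod n = 0" by simp
      then have "i = 0" using h by simp
      then show False using \<open>i + 1 = n\<close> vs(2) by simp
    qed
  qed
  show "C \<subseteq> edges n"
  proof
    fix e assume "e \<in> C"
    then obtain i where i: "i < n" "e = {vs ! i, vs ! ((i + 1) mod n)}" unfolding C by blast
    have "vs ! i \<in> {1..n}" "vs ! ((i + 1) mod n) \<in> {1..n}" using inn i(1) m by blast+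
    moreover have "vs ! i \<noteq> vs ! ((i + 1) mod n)" using ne i(1) by blast
    ultimately show "e \<in> edges n" unfolding edges_def i(2) by blast
  qed
  have "inj_on (\<lambda>i. {vs ! i, vs ! ((i + 1) mod n)}) {..<n}"
  proof (rule inj_onI)
    fix i j assume ij: "i \<in> {..<n}" "j \<in> {..<n}"
      "{vs ! i, vs ! ((i + 1) mod n)} = {vs ! j, vs ! ((j + 1) mod n)}"
    have i: "i < n" and j: "j < n" using ij(1,2) by simp_all
    from ij(3) have "(vs ! i = vs ! j) \<or> (vs ! i = vs ! ((j + 1) mod n) \<and> vs ! ((i + 1) mod n) = vs ! j)"
      unfolding doubleton_eq_iff by blast
    then show "i = j"
    proof
      assume "vs ! i = vs ! j" then show ?thesis using eq[OF i j] by blast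
    next
      assume h: "vs ! i = vs ! ((j + 1) mod n) \<and> vs ! ((i + 1) mod n) = vs ! j"
      then have "i = (j + 1) mod n" using eq[OF i m] by blast
      moreover have "j = (i + 1) mod n" using h eq[OF m j] by metis
      ultimately show ?thesis using mod_lemma[OF i j vs(2)] by blast
    qed
  qed
  then have "card C = card {..<n}" unfolding C by (rule card_image)
  then show "card C = n" by simp
qed

lemma edges_eq: "edges n = {B. B \<subseteq> {1..n} \<and> card B = 2}"
proof (rule set_eqI, rule iffI)
  fix B assume "B \<in> edges n"
  then obtain i j where "B = {i, j}" "i \<in> {1..n}" "j \<in> {1..n}" "i \<noteq> j"
    unfolding edges_def by blast
  then show "B \<in> {B. B \<subseteq> {1..n} \<and> card B = 2}" by simp
next
  fix B assume "B \<in> {B. B \<subseteq> {1..n} \<and> card B = 2}"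
  then have B: "B \<subseteq> {1..n}" "card B = 2" by auto
  then obtain i j where "B = {i, j}" "i \<noteq> j" by (auto simp: card_2_iff)
  then show "B \<in> edges n" unfolding edges_def using B(1) by blast
qed

lemma card_edges: "card (edges n) = n * (n - 1) div 2"
  unfolding edges_eq by (simp add: n_subsets choose_two)

lemma finite_edges: "finite (edges n)"
  unfolding edges_eq by (rule finite_subset[of _ "Pow {1..n}"]) auto

lemma finite_ham: "finite (ham_cycles n)"
  by (rule finite_subset[of _ "Pow (edges n)"]) (use cycle_props(2) finite_edges in auto)


lemma HC_eq: "HC n = (\<lambda>C. (\<lambda>e. if e \<in> C then 1 else 0)) ` ham_cycles n"
  unfolding HC_def by auto

lemma finite_HC: "finite (HC n)"
  unfolding HC_eq using finite_ham by simp

lemma HC_01: "x \<in> HC n \<Longrightarrow> x e = 0 \<or> x e = 1"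
  unfolding HC_def by auto

lemma cnt_sw:
  assumes "a \<in> {1..n}" "b \<in> {1..n}"
  shows "card {x \<in> HC n. x (sw a b ` e) = 1} = card {x \<in> HC n. x e = 1}"
proof -
  define g where "g = image (sw a b)"
  have gg: "g (g u) = u" for u unfolding g_def by (simp add: image_image)
  define \<phi> where "\<phi> x = x \<circ> g" for x :: point
  have \<phi>\<phi>: "\<phi> (\<phi> x) = x" for x unfolding \<phi>_def by (simp add: comp_def gg)
  have \<phi>HC: "\<phi> x \<in> HC n" if xin: "x \<in> HC n" for x
  proof -
    obtain C where C: "C \<in> ham_cycles n" "x = (\<lambda>e. if e \<in> C then 1 else 0)"
      using xin unfolding HC_def by blast
    have "\<phi> x = (\<lambda>e. if e \<in> g ` C then 1 else 0)"
    proof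
      fix u
      have "(g u \<in> C) = (u \<in> g ` C)" by (metis gg image_iff)
      then show "\<phi> x u = (if u \<in> g ` C then 1 else 0)" unfolding \<phi>_def C(2) by simp
    qed
    moreover have "g ` C \<in> ham_cycles n" unfolding g_def using ham_sw[OF C(1) assms] .
    ultimately show ?thesis unfolding HC_def by blast
  qed
  have "bij_betw \<phi> {x \<in> HC n. x (g e) = 1} {x \<in> HC n. x e = 1}"
    by (rule bij_betw_byWitness[where f' = \<phi>])
       (auto simp: \<phi>\<phi> \<phi>HC, auto simp: \<phi>_def gg)
  then show ?thesis unfolding g_def by (rule bij_betw_same_card)
qed

lemma cnt_const:
  assumes "e \<in> edges n" "e' \<in> edges n"
  shows "card {x \<in> HC n. x e = 1} = card {x \<in> HC n. x e' = 1}"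
proof -
  obtain i j where e: "e = {i, j}" "i \<in> {1..n}" "j \<in> {1..n}" "i \<noteq> j"
    using assms(1) unfolding edges_def by blast
  obtain i' j' where e': "e' = {i', j'}" "i' \<in> {1..n}" "j' \<in> {1..n}" "i' \<noteq> j'"
    using assms(2) unfolding edges_def by blast
  define j2 where "j2 = sw i i' j"
  have 1: "sw i i' ` e = {i', j2}" unfolding e j2_def by (simp add: sw_def)
  have j2: "j2 \<in> {1..n}" "j2 \<noteq> i'" unfolding j2_def using e sw_range[OF e(2) e'(2)]
    by (auto simp: sw_def)
  have 2: "sw j2 j' ` {i', j2} = e'" unfolding e' using j2 e' by (auto simp: sw_def)
  have "card {x \<in> HC n. x e = 1} = card {x \<in> HC n. x {i', j2} = 1}"
    using cnt_sw[OF e(2) e'(2), of e] 1 by simp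
  also have "\<dots> = card {x \<in> HC n. x e' = 1}"
    using cnt_sw[OF j2(1) e'(3), of "{i', j2}"] 2 by simp
  finally show ?thesis .
qed

lemma sum_lin:
  fixes S :: "point set" and a :: "nat set \<Rightarrow> real" and g :: "point \<Rightarrow> real"
  assumes "finite S" "\<forall>x\<in>S. \<forall>e. x e = 0 \<or> x e = 1"
  shows "(\<Sum>x\<in>S. (\<Sum>e\<in>E. a e * x e) * g x) = (\<Sum>e\<in>E. a e * (\<Sum>x\<in>{x\<in>S. x e = 1}. g x))"
proof -
  have "(\<Sum>x\<in>S. (\<Sum>e\<in>E. a e * x e) * g x) = (\<Sum>x\<in>S. \<Sum>e\<in>E. a e * (x e * g x))"
    unfolding sum_distrib_right by (simp add: mult.assoc)
  also have "\<dots> = (\<Sum>e\<in>E. \<Sum>x\<in>S. a e * (x e * g x))" by (rule sum.swap)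
  also have "\<dots> = (\<Sum>e\<in>E. a e * (\<Sum>x\<in>S. (if x e = 1 then g x else 0)))"
  proof (rule sum.cong[OF refl])
    fix e
    have "(\<Sum>x\<in>S. x e * g x) = (\<Sum>x\<in>S. (if x e = 1 then g x else 0))"
      by (rule sum.cong[OF refl]) (use assms(2) in force)
    then show "(\<Sum>x\<in>S. a e * (x e * g x)) = a e * (\<Sum>x\<in>S. (if x e = 1 then g x else 0))"
      by (simp only: sum_distrib_left[symmetric])
  qed
  also have "\<dots> = (\<Sum>e\<in>E. a e * (\<Sum>x\<in>{x\<in>S. x e = 1}. g x))"
    using assms(1) by (simp add: sum.inter_filter)
  finally show ?thesis .
qed


theorem lemma1:
  fixes n k M :: nat and y :: point and f :: "point \<Rightarrow> real"
    and p :: "nat \<Rightarrow> point \<Rightarrow> real" and b c :: real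
  assumes "y \<in> HC n"
    and "f \<in> Pk n k"
    and "\<forall>l\<in>{1..M}. poly_deg_le n k (p l)"
    and "\<forall>l\<in>{1..M}. \<forall>x\<in>HC n. p l x = 0 \<or> p l x = 1"
    and "0 < b" and "b < c"
    and "\<forall>i\<in>{1..n}. \<forall>j\<in>{1..n}. i \<noteq> j \<longrightarrow>
           (\<Sum>x\<in>{x\<in>HC n. x {i, j} = 1}. \<Sum>l=1..M. p l x)
             = (if y {i, j} = 1 then c else b)"
  shows "- (b * (real n - 1)) / (2 * (c - b)) \<le> f y"
proof -
  let ?X = "HC n"
  let ?E = "edges n"
  obtain a where a: "\<forall>x\<in>?X. f x = (\<Sum>e\<in>?E. a e * x e)"
    and avg: "(1 / real (card ?X)) * (\<Sum>x\<in>?X. f x) = 1"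
    and q: "\<forall>h. poly_deg_le n k h \<longrightarrow> qf n f h \<ge> 0"
    using assms(2) unfolding Pk_def by blast
  have finX: "finite ?X" by (rule finite_HC)
  have X01: "\<forall>x\<in>?X. \<forall>e. x e = 0 \<or> x e = 1" using HC_01 by blast
  have cardX: "card ?X > 0" using assms(1) finX card_gt_0_iff by blast
  obtain Cy where Cy: "Cy \<in> ham_cycles n" using assms(1) unfolding HC_def by blast
  have n3: "n \<ge> 3" using cycle_props(1)[OF Cy] .
  define A where "A = (\<Sum>e\<in>?E. a e)"
  define cnt where "cnt e = real (card {x \<in> ?X. x e = 1})" for e
  have "Cy \<noteq> {}" using cycle_props(3)[OF Cy] n3 by auto
  then obtain e0 where "e0 \<in> Cy" by blast
  then have e0: "e0 \<in> ?E" using cycle_props(2)[OF Cy] by blast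
  define K where "K = cnt e0"
  have cntK: "cnt e = K" if "e \<in> ?E" for e
    unfolding K_def cnt_def using cnt_const[OF that e0] by simp
  have "(\<Sum>x\<in>?X. f x) = (\<Sum>x\<in>?X. (\<Sum>e\<in>?E. a e * x e) * 1)"
    using a by simp
  also have "\<dots> = (\<Sum>e\<in>?E. a e * cnt e)"
    unfolding sum_lin[OF finX X01] cnt_def by simp
  also have "\<dots> = K * A"
    unfolding A_def sum_distrib_left using cntK by (simp add: mult.commute)
  finally have KA: "K * A = real (card ?X)" using avg cardX by simp
  have "(\<Sum>x\<in>?X. (\<Sum>e\<in>?E. 1 * x e) * 1) = (\<Sum>e\<in>?E. 1 * cnt e)"
    unfolding sum_lin[OF finX X01] cnt_def by simp
  also have "\<dots> = K * real (card ?E)" using cntK by simp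
  finally have s1: "(\<Sum>x\<in>?X. (\<Sum>e\<in>?E. x e)) = K * real (card ?E)" by simp
  have "(\<Sum>e\<in>?E. x e) = real n" if xX: "x \<in> ?X" for x
  proof -
    obtain C where C: "C \<in> ham_cycles n" "x = (\<lambda>e. if e \<in> C then 1 else 0)"
      using xX unfolding HC_def by blast
    have "(\<Sum>e\<in>?E. x e) = real (card (?E \<inter> C))"
      unfolding C(2) using finite_edges by (simp add: sum.If_cases)
    also have "?E \<inter> C = C" using cycle_props(2)[OF C(1)] by blast
    finally show ?thesis using cycle_props(3)[OF C(1)] by simp
  qed
  then have "(\<Sum>x\<in>?X. (\<Sum>e\<in>?E. x e)) = real n * real (card ?X)" by simp
  with s1 have "K * real (card ?E) = real n * real (card ?X)" by simp
  moreover have "2 * real (card ?E) = real n * (real n - 1)"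
  proof -
    have ev: "even (n * (n - 1))"
    proof (cases "even n")
      case False
      then have "even (n - 1)" using n3 by simp
      then show ?thesis by simp
    qed simp
    have "2 * card ?E = n * (n - 1)" unfolding card_edges using ev by simp
    then have "real (2 * card ?E) = real (n * (n - 1))" by metis
    then show ?thesis using n3 by (simp add: of_nat_diff)
  qed
  ultimately have "K * (real n * (real n - 1)) = 2 * real n * real (card ?X)"
    by (metis mult.assoc mult.left_commute)
  then have "real n * (K * (real n - 1)) = real n * (2 * real (card ?X))"
    by (simp add: algebra_simps)
  then have K: "K * (real n - 1) = 2 * real (card ?X)" using n3 by simp
  have Kpos: "K > 0"
  proof -
    have "K * (real n - 1) > 0" using K cardX by simp
    moreover have "real n - 1 > 0" using n3 by simp
    ultimately show ?thesis by (simp add: zero_less_mult_iff)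
  qed
  have Aval: "A = (real n - 1) / 2"
  proof -
    have "K * (2 * A) = K * (real n - 1)" using KA K by (simp add: algebra_simps)
    then have "2 * A = real n - 1" using Kpos by simp
    then show ?thesis by simp
  qed
  define P where "P x = (\<Sum>l=1..M. p l x)" for x
  have pos_l: "(\<Sum>x\<in>?X. f x * p l x) \<ge> 0" if l: "l \<in> {1..M}" for l
  proof -
    have "qf n f (p l) \<ge> 0" using q assms(3) l by blast
    then have "(\<Sum>x\<in>?X. f x * (p l x)^2) \<ge> 0" unfolding qf_def using cardX
      by (simp add: zero_le_divide_iff)
    moreover have "(\<Sum>x\<in>?X. f x * (p l x)^2) = (\<Sum>x\<in>?X. f x * p l x)"
    proof (rule sum.cong[OF refl])
      fix x assume "x \<in> ?X"
      then have "p l x = 0 \<or> p l x = 1" using assms(4) l by blast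
      then show "f x * (p l x)^2 = f x * p l x" by auto
    qed
    ultimately show ?thesis by simp
  qed
  have "0 \<le> (\<Sum>l=1..M. \<Sum>x\<in>?X. f x * p l x)" by (rule sum_nonneg) (rule pos_l)
  also have "\<dots> = (\<Sum>x\<in>?X. f x * P x)"
    unfolding P_def sum_distrib_left by (rule sum.swap)
  also have "\<dots> = (\<Sum>x\<in>?X. (\<Sum>e\<in>?E. a e * x e) * P x)" using a by simp
  also have "\<dots> = (\<Sum>e\<in>?E. a e * (\<Sum>x\<in>{x\<in>?X. x e = 1}. P x))"
    by (rule sum_lin[OF finX X01])
  also have "\<dots> = (\<Sum>e\<in>?E. a e * (b + (c - b) * y e))"
  proof (rule sum.cong[OF refl])
    fix e assume "e \<in> ?E"
    then obtain i j where e: "e = {i, j}" "i \<in> {1..n}" "j \<in> {1..n}" "i \<noteq> j"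
      unfolding edges_def by blast
    have "(\<Sum>x\<in>{x\<in>?X. x e = 1}. P x) = (if y e = 1 then c else b)"
    proof -
      have "(\<Sum>x\<in>{x\<in>?X. x {i, j} = 1}. \<Sum>l=1..M. p l x) = (if y {i, j} = 1 then c else b)"
        using assms(7) e(2-4) by blast
      then show ?thesis unfolding P_def e(1) .
    qed
    also have "\<dots> = b + (c - b) * y e" using HC_01[OF assms(1), of e] by auto
    finally show "a e * (\<Sum>x\<in>{x\<in>?X. x e = 1}. P x) = a e * (b + (c - b) * y e)" by simp
  qed
  also have "\<dots> = b * A + (c - b) * (\<Sum>e\<in>?E. a e * y e)"
  proof -
    have "(\<Sum>e\<in>?E. a e * (b + (c - b) * y e)) = (\<Sum>e\<in>?E. b * a e + (c - b) * (a e * y e))"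
      by (rule sum.cong[OF refl]) (simp add: algebra_simps)
    also have "\<dots> = (\<Sum>e\<in>?E. b * a e) + (\<Sum>e\<in>?E. (c - b) * (a e * y e))"
      by (rule sum.distrib)
    finally show ?thesis unfolding A_def sum_distrib_left .
  qed
  also have "\<dots> = b * ((real n - 1) / 2) + (c - b) * f y"
  proof -
    have "f y = (\<Sum>e\<in>?E. a e * y e)" using a assms(1) by blast
    then show ?thesis using Aval by simp
  qed
  finally have main: "0 \<le> b * ((real n - 1) / 2) + (c - b) * f y" .
  have cb: "c - b > 0" using assms(6) by simp
  have h: "- (b * (real n - 1)) \<le> f y * (2 * (c - b))" using main by (simp add: field_simps)
  have pos: "2 * (c - b) > 0" using cb by simp
  show ?thesis unfolding pos_divide_le_eq[OF pos] by (rule h)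
qed

end
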